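(* For the modular data of the quantum double of $S_3$, the modular invariants $Z_6$, $Z_{11}$, $Z_{14}$, $Z_{15}$ and the transposes $Z_{41}$, $Z_{51}$ are nimless.
   Context: Primaries $0,\dots,7$, all self-conjugate, with $S=\frac16\begin{pmatrix}1&1&2&2&2&2&3&3\\1&1&2&2&2&2&-3&-3\\2&2&4&-2&-2&-2&0&0\\2&2&-2&4&-2&-2&0&0\\2&2&-2&-2&-2&4&0&0\\2&2&-2&-2&4&-2&0&0\\3&-3&0&0&0&0&3&-3\\3&-3&0&0&0&0&-3&3\end{pmatrix}$, $T=\mathrm{diag}(1,1,1,1,e^{2\pi i/3},e^{4\pi i/3},1,-1)$, fusion coefficients $N_{\lambda\mu}^\nu=\sum_\rho S_{\lambda\rho}S_{\mu\rho}\overline{S_{\nu\rho}}/S_{0\rho}$. Matrices are written as $\sum Z_{\lambda\mu}\chi_\lambda\chi_\mu^*$; for linear forms $s=\sum a_\lambda\chi_\lambda$, $t=\sum b_\mu\chi_\mu$, $st^*$ is the matrix $(a_\lambda b_\mu)$. $Z_6=|\chi_0+\chi_1|^2+|\chi_2|^2+|\chi_3|^2+2|\chi_4|^2+2|\chi_5|^2+\chi_2\chi_3^*+\chi_3\chi_2^*$. With $s_1=\chi_0+\chi_1+\chi_2+\chi_3$, $s_4=\chi_0+\chi_2+\chi_6$, $s_5=\chi_0+\chi_3+\chi_6$: $Z_{ij}=s_is_j^*$. A nimrep of dimension $n$: non-negative integer $n\times n$ matrices $G_\lambda$ with $G_0=I$, $G_{\bar\lambda}=G_\lambda^t$, $G_\lambda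 G_\mu=\sum_\nu N_{\lambda\mu}^\nu G_\nu$. $\mathrm{Exp}(Z)$ is the multiset with $Z_{\mu\mu}$ copies of $\mu$. A nimrep matches $Z$ if $n=\mathrm{Tr}\,Z$ and the $G_\lambda$ are simultaneously unitarily diagonalisable with joint eigenvalues $(S_{\lambda\mu}/S_{0\mu})_\lambda$, $\mu$ running through $\mathrm{Exp}(Z)$ with multiplicity. $Z$ is nimless if no matching nimrep exists. *)

theory Defs
  imports Complex_Main
begin

text \<open>Modular data of the quantum double of S3: primaries 0..7 (all self-conjugate).\<close>

definition S_int :: "int list list" where
  "S_int = [[1,1,2,2,2,2,3,3],
            [1,1,2,2,2,2,-3,-3],
            [2,2,4,-2,-2,-2,0,0],
            [2,2,-2,4,-2,-2,0,0],
            [2,2,-2,-2,-2,4,0,0],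
            [2,2,-2,-2,4,-2,0,0],
            [3,-3,0,0,0,0,3,-3],
            [3,-3,0,0,0,0,-3,3]]"

definition Smat :: "nat \<Rightarrow> nat \<Rightarrow> complex" where
  "Smat l m = of_int (S_int ! l ! m) / 6"

definition Tmat :: "nat \<Rightarrow> complex" where
  "Tmat l = [1,1,1,1, cis (2*pi/3), cis (4*pi/3), 1, -1] ! l"

definition cconj :: "nat \<Rightarrow> nat" where
  "cconj l = l"

definition Nfus :: "nat \<Rightarrow> nat \<Rightarrow> nat \<Rightarrow> complex" where
  "Nfus l m n = (\<Sum>r<8. Smat l r * Smat m r * cnj (Smat n r) / Smat 0 r)"

text \<open>Matrices Z indexed by primaries 0..7; linear forms as coefficient vectors.\<close>
definition outer :: "(nat \<Rightarrow> nat) \<Rightarrow> (nat \<Rightarrow> nat) \<Rightarrow> nat \<Rightarrow> nat \<Rightarrow> nat" where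
  "outer s t = (\<lambda>l m. s l * t m)"

definition s1 :: "nat \<Rightarrow> nat" where
  "s1 l = (if l \<in> {0,1,2,3} then 1 else 0)"
definition s4 :: "nat \<Rightarrow> nat" where
  "s4 l = (if l \<in> {0,2,6} then 1 else 0)"
definition s5 :: "nat \<Rightarrow> nat" where
  "s5 l = (if l \<in> {0,3,6} then 1 else 0)"

definition Z11 :: "nat \<Rightarrow> nat \<Rightarrow> nat" where "Z11 = outer s1 s1"
definition Z14 :: "nat \<Rightarrow> nat \<Rightarrow> nat" where "Z14 = outer s1 s4"
definition Z15 :: "nat \<Rightarrow> nat \<Rightarrow> nat" where "Z15 = outer s1 s5"
definition Z41 :: "nat \<Rightarrow> nat \<Rightarrow> nat" where "Z41 = outer s4 s1"
definition Z51 :: "nat \<Rightarrow> nat \<Rightarrow> nat" where "Z51 = outer s5 s1"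

definition Z6 :: "nat \<Rightarrow> nat \<Rightarrow> nat" where
  "Z6 l m = (if l \<in> {0,1} \<and> m \<in> {0,1} then 1
             else if l \<in> {2,3} \<and> m \<in> {2,3} then 1
             else if l = m \<and> l \<in> {4,5} then 2
             else 0)"

definition trZ :: "(nat \<Rightarrow> nat \<Rightarrow> nat) \<Rightarrow> nat" where
  "trZ Z = (\<Sum>m<8. Z m m)"

definition is_nimrep :: "nat \<Rightarrow> (nat \<Rightarrow> nat \<Rightarrow> nat \<Rightarrow> nat) \<Rightarrow> bool" where
  "is_nimrep n G \<longleftrightarrow>
     (\<forall>i<n. \<forall>j<n. G 0 i j = (if i = j then 1 else 0)) \<and>
     (\<forall>l<8. \<forall>i<n. \<forall>j<n. G (cconj l) i j = G l j i) \<and>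
     (\<forall>l<8. \<forall>m<8. \<forall>i<n. \<forall>j<n.
        of_nat (\<Sum>k<n. G l i k * G m k j) = (\<Sum>v<8. Nfus l m v * of_nat (G v i j)))"

text \<open>Matching: n = Tr Z and there is a unitary U and a labelling e of the basis
  by Exp(Z) (mu occurring Z mu mu times) with U^* G_l U = diag(S_{l,e i}/S_{0,e i}).\<close>
definition matches :: "(nat \<Rightarrow> nat \<Rightarrow> nat) \<Rightarrow> nat \<Rightarrow> (nat \<Rightarrow> nat \<Rightarrow> nat \<Rightarrow> nat) \<Rightarrow> bool" where
  "matches Z n G \<longleftrightarrow> n = trZ Z \<and>
     (\<exists>U :: nat \<Rightarrow> nat \<Rightarrow> complex. \<exists>e :: nat \<Rightarrow> nat.
        (\<forall>i<n. e i < 8) \<and>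
        (\<forall>m<8. card {i. i < n \<and> e i = m} = Z m m) \<and>
        (\<forall>i<n. \<forall>j<n. (\<Sum>k<n. cnj (U k i) * U k j) = (if i = j then 1 else 0)) \<and>
        (\<forall>l<8. \<forall>i<n. \<forall>j<n.
           (\<Sum>k<n. \<Sum>k'<n. cnj (U k i) * of_nat (G l k k') * U k' j) =
           (if i = j then Smat l (e i) / Smat 0 (e i) else 0)))"

definition nimless :: "(nat \<Rightarrow> nat \<Rightarrow> nat) \<Rightarrow> bool" where
  "nimless Z \<longleftrightarrow> \<not> (\<exists>n G. is_nimrep n G \<and> matches Z n G)"

end

theory Submission
  imports Defs "Jordan_Normal_Form.Determinant"
begin

lemma two_le_sum:
  fixes f :: "nat \<Rightarrow> nat"
  assumes "finite A" "i \<in> A" "j \<in> A" "i \<noteq> j"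
  shows "f i + f j \<le> sum f A"
proof -
  have "sum f {i, j} = f i + f j" using assms(4) by simp
  moreover have "sum f {i, j} \<le> sum f A"
    by (rule sum_mono2) (use assms in auto)
  ultimately show ?thesis by simp
qed

lemma one_le_sum:
  fixes f :: "nat \<Rightarrow> nat"
  assumes "finite A" "i \<in> A"
  shows "f i \<le> sum f A"
  using assms by (simp add: member_le_sum)

lemma G1_id:
  fixes X :: "nat \<Rightarrow> nat \<Rightarrow> nat"
  assumes sq: "\<forall>i<n. \<forall>j<n. (\<Sum>k<n. X i k * X k j) = (if i = j then 1 else 0)"
    and sym: "\<forall>i<n. \<forall>j<n. X i j = X j i"
    and tr: "(\<Sum>a<n. X a a) = n"
  shows "\<forall>i<n. \<forall>j<n. X i j = (if i = j then 1 else 0)"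
proof -
  have le1: "X a a \<le> 1" if "a < n" for a
  proof -
    have "X a a * X a a \<le> (\<Sum>k<n. X a k * X k a)"
      using one_le_sum[of "{..<n}" a "\<lambda>k. X a k * X k a"] that by simp
    then have "X a a * X a a \<le> 1" using sq that by simp
    then show ?thesis using le_square[of "X a a"] by linarith
  qed
  have eq1: "X a a = 1" if "a < n" for a
  proof (rule ccontr)
    assume "X a a \<noteq> 1"
    then have "X a a < 1" using le1 that by force
    then have "(\<Sum>b<n. X b b) < (\<Sum>b<n. 1)"
      using le1 that by (intro sum_strict_mono_ex1) auto
    then show False using tr by simp
  qed
  show ?thesis
  proof (intro allI impI)
    fix i j assume ij: "i < n" "j < n"
    show "X i j = (if i = j then 1 else 0)"
    proof (cases "i = j")
      case True then show ?thesis using eq1 ij by simp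
    next
      case False
      have "X i i * X i i + X i j * X j i \<le> (\<Sum>k<n. X i k * X k i)"
        using two_le_sum[of "{..<n}" i j "\<lambda>k. X i k * X k i"] ij False by simp
      then have "1 + X i j * X j i \<le> 1" using sq ij eq1 by simp
      then show ?thesis using False sym ij by simp
    qed
  qed
qed

lemma no_sq:
  fixes X :: "nat \<Rightarrow> nat \<Rightarrow> nat"
  assumes sq: "\<forall>i<n. \<forall>j<n. (\<Sum>k<n. X i k * X k j) = X i j + (if i = j then 2 else 0)"
    and sym: "\<forall>i<n. \<forall>j<n. X i j = X j i"
    and odd: "odd (\<Sum>a<n. X a a)"
  shows False
proof -
  have le2: "X a a \<le> 2" if "a < n" for a
  proof -
    have "X a a * X a a \<le> (\<Sum>k<n. X a k * X k a)"
      using one_le_sum[of "{..<n}" a "\<lambda>k. X a k * X k a"] that by simp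
    then have h: "X a a * X a a \<le> X a a + 2" using sq that by simp
    show ?thesis
    proof (rule ccontr)
      assume "\<not> X a a \<le> 2"
      then have "3 * X a a \<le> X a a * X a a" by simp
      then show False using h \<open>\<not> X a a \<le> 2\<close> by linarith
    qed
  qed
  obtain v where v: "v < n" "X v v = 1"
  proof (rule ccontr)
    assume "\<not> thesis"
    then have "\<forall>a<n. X a a \<noteq> 1" using that by blast
    have "even (X a a)" if "a < n" for a
    proof -
      have "X a a = 0 \<or> X a a = 2" using le2[OF that] \<open>\<forall>a<n. X a a \<noteq> 1\<close> that by force
      then show ?thesis by auto
    qed
    then have "even (\<Sum>a<n. X a a)" by (intro dvd_sum) auto
    then show False using odd by simp
  qed
  have rv: "(\<Sum>k<n. X v k * X k v) = 3" using sq v by simp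
  obtain a where a: "a < n" "a \<noteq> v" "X v a \<ge> 1"
  proof (rule ccontr)
    assume "\<not> thesis"
    then have z: "\<forall>k<n. k \<noteq> v \<longrightarrow> X v k = 0" using that by force
    have "(\<Sum>k<n. X v k * X k v) = (\<Sum>k\<in>{v}. X v k * X k v)"
      by (rule sum.mono_neutral_right) (use v z in auto)
    then show False using rv v by simp
  qed
  have "X v v * X v a + X v a * X a a \<le> (\<Sum>k<n. X v k * X k a)"
    using two_le_sum[of "{..<n}" v a "\<lambda>k. X v k * X k a"] a v by simp
  then have "X v a + X v a * X a a \<le> X v a" using sq a v by simp
  then have aa: "X a a = 0" using a by simp
  have ra: "(\<Sum>k<n. X a k * X k a) = 2" using sq a aa by simp
  have va: "X v a = 1"
  proof -
    have "X a v * X v a \<le> (\<Sum>k<n. X a k * X k a)"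
      using one_le_sum[of "{..<n}" v "\<lambda>k. X a k * X k a"] v by simp
    then have "X v a * X v a \<le> 2" using ra sym a v by simp
    show ?thesis
    proof (rule ccontr)
      assume "X v a \<noteq> 1"
      then have "2 \<le> X v a" using a(3) by simp
      then have "2 * 2 \<le> X v a * X v a" by (intro mult_le_mono)
      then show False using \<open>X v a * X v a \<le> 2\<close> by simp
    qed
  qed
  obtain c where c: "c < n" "c \<noteq> v" "X a c \<ge> 1"
  proof (rule ccontr)
    assume "\<not> thesis"
    then have z: "\<forall>k<n. k \<noteq> v \<longrightarrow> X a k = 0" using that by force
    have "(\<Sum>k<n. X a k * X k a) = (\<Sum>k\<in>{v}. X a k * X k a)"
      by (rule sum.mono_neutral_right) (use v z in auto)
    then show False using ra va sym a v by simp
  qed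
  have "c \<noteq> a" using c aa by auto
  have "X v v * X v c + X v a * X a c \<le> (\<Sum>k<n. X v k * X k c)"
    using two_le_sum[of "{..<n}" v a "\<lambda>k. X v k * X k c"] a v by simp
  then have "X v c + X a c \<le> X v c" using sq c v va by simp
  then show False using c by simp
qed

lemma right_unitary:
  fixes U :: "nat \<Rightarrow> nat \<Rightarrow> complex"
  assumes u: "\<forall>i<n. \<forall>j<n. (\<Sum>k<n. cnj (U k i) * U k j) = (if i = j then 1 else 0)"
  shows "\<forall>a<n. \<forall>b<n. (\<Sum>i<n. U a i * cnj (U b i)) = (if a = b then 1 else 0)"
proof -
  define A where "A = mat n n (\<lambda>(i,k). cnj (U k i))"
  define B where "B = mat n n (\<lambda>(k,j). U k j)"
  have AB: "A * B = 1\<^sub>m n"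
  proof (rule eq_matI)
    fix i j assume "i < dim_row (1\<^sub>m n)" "j < dim_col (1\<^sub>m n)"
    then have ij: "i < n" "j < n" by auto
    have "(A * B) $$ (i, j) = (\<Sum>k<n. cnj (U k i) * U k j)"
      using ij by (simp add: A_def B_def scalar_prod_def atLeast0LessThan)
    then show "(A * B) $$ (i, j) = 1\<^sub>m n $$ (i, j)" using u ij by simp
  qed (auto simp: A_def B_def)
  have BA: "B * A = 1\<^sub>m n"
    by (rule mat_mult_left_right_inverse[of A n B]) (use AB in \<open>auto simp: A_def B_def\<close>)
  show ?thesis
  proof (intro allI impI)
    fix a b assume ab: "a < n" "b < n"
    have "(B * A) $$ (a, b) = (\<Sum>i<n. U a i * cnj (U b i))"
      using ab by (simp add: A_def B_def scalar_prod_def atLeast0LessThan)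
    then show "(\<Sum>i<n. U a i * cnj (U b i)) = (if a = b then 1 else 0)"
      using BA ab by simp
  qed
qed

lemma trace_eq:
  fixes U :: "nat \<Rightarrow> nat \<Rightarrow> complex" and X :: "nat \<Rightarrow> nat \<Rightarrow> nat"
  assumes u: "\<forall>i<n. \<forall>j<n. (\<Sum>k<n. cnj (U k i) * U k j) = (if i = j then 1 else 0)"
    and dg: "\<forall>i<n. \<forall>j<n. (\<Sum>k<n. \<Sum>k'<n. cnj (U k i) * of_nat (X k k') * U k' j) =
             (if i = j then d i else 0)"
  shows "(\<Sum>a<n. of_nat (X a a)) = (\<Sum>i<n. d i)"
proof -
  have r: "\<forall>a<n. \<forall>b<n. (\<Sum>i<n. U a i * cnj (U b i)) = (if a = b then 1 else 0)"
    using right_unitary[OF u] .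
  have "(\<Sum>i<n. d i) = (\<Sum>i<n. \<Sum>k<n. \<Sum>k'<n. cnj (U k i) * of_nat (X k k') * U k' i)"
    using dg by simp
  also have "\<dots> = (\<Sum>k<n. \<Sum>i<n. \<Sum>k'<n. cnj (U k i) * of_nat (X k k') * U k' i)"
    by (rule sum.swap)
  also have "\<dots> = (\<Sum>k<n. \<Sum>k'<n. \<Sum>i<n. cnj (U k i) * of_nat (X k k') * U k' i)"
    by (rule sum.cong[OF refl], rule sum.swap)
  also have "\<dots> = (\<Sum>k<n. \<Sum>k'<n. of_nat (X k k') * (\<Sum>i<n. U k' i * cnj (U k i)))"
    by (simp add: sum_distrib_left mult_ac)
  also have "\<dots> = (\<Sum>k<n. \<Sum>k'<n. if k' = k then of_nat (X k k) else 0)"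
    using r by (intro sum.cong refl) auto
  also have "\<dots> = (\<Sum>k<n. of_nat (X k k))" by simp
  finally show ?thesis by simp
qed

lemma group_sum:
  fixes f :: "nat \<Rightarrow> complex" and n :: nat and e :: "nat \<Rightarrow> nat" and Z :: "nat \<Rightarrow> nat \<Rightarrow> nat"
  assumes e: "\<forall>i<n. e i < 8" and c: "\<forall>m<8. card {i. i < n \<and> e i = m} = Z m m"
  shows "(\<Sum>i<n. f (e i)) = (\<Sum>m<8. of_nat (Z m m) * f m)"
proof -
  have "(\<Sum>i<n. f (e i)) = (\<Sum>i<n. \<Sum>m<(8::nat). if e i = m then f m else 0)"
    using e by (intro sum.cong refl) (simp add: sum.delta)
  also have "\<dots> = (\<Sum>m<(8::nat). \<Sum>i<n. if e i = m then f m else 0)"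
    by (rule sum.swap)
  also have "\<dots> = (\<Sum>m<8. of_nat (Z m m) * f m)"
  proof (intro sum.cong refl)
    fix m :: nat assume m: "m \<in> {..<8}"
    have "(\<Sum>i<n. if e i = m then f m else 0) = of_nat (card ({..<n} \<inter> {i. e i = m})) * f m"
      using sum.inter_restrict[OF finite_lessThan[of n], where g="\<lambda>_. f m" and B="{i. e i = m}"] by simp
    also have "{..<n} \<inter> {i. e i = m} = {i. i < n \<and> e i = m}" by auto
    finally show "(\<Sum>i<n. if e i = m then f m else 0) = of_nat (Z m m) * f m"
      using c m by simp
  qed
  finally show ?thesis .
qed

lemma trace_formula:
  assumes "matches Z n G" "l < 8"
  shows "of_nat (\<Sum>a<n. G l a a) = (\<Sum>m<8. of_nat (Z m m) * (Smat l m / Smat 0 m))"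
proof -
  have ex: "\<exists>U :: nat \<Rightarrow> nat \<Rightarrow> complex. \<exists>e :: nat \<Rightarrow> nat.
        (\<forall>i<n. e i < 8) \<and>
        (\<forall>m<8. card {i. i < n \<and> e i = m} = Z m m) \<and>
        (\<forall>i<n. \<forall>j<n. (\<Sum>k<n. cnj (U k i) * U k j) = (if i = j then 1 else 0)) \<and>
        (\<forall>l<8. \<forall>i<n. \<forall>j<n.
           (\<Sum>k<n. \<Sum>k'<n. cnj (U k i) * of_nat (G l k k') * U k' j) =
           (if i = j then Smat l (e i) / Smat 0 (e i) else 0))"
    using assms(1) unfolding matches_def by (rule conjunct2)
  from ex obtain U e where h: "(\<forall>i<n. e i < 8) \<and>
        (\<forall>m<8. card {i. i < n \<and> e i = m} = Z m m) \<and>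
        (\<forall>i<n. \<forall>j<n. (\<Sum>k<n. cnj (U k i) * U k j) = (if i = j then 1 else 0)) \<and>
        (\<forall>l<8. \<forall>i<n. \<forall>j<n.
           (\<Sum>k<n. \<Sum>k'<n. cnj (U k i) * of_nat (G l k k') * U k' j) =
           (if i = j then Smat l (e i) / Smat 0 (e i) else 0))"
    by (elim exE) (erule that)
  note e = h[THEN conjunct1]
  note c = h[THEN conjunct2, THEN conjunct1]
  note u = h[THEN conjunct2, THEN conjunct2, THEN conjunct1]
  note dg = h[THEN conjunct2, THEN conjunct2, THEN conjunct2]
  note dgl = mp[OF spec[OF dg, of l] assms(2)]
  have "of_nat (\<Sum>a<n. G l a a) = (\<Sum>a<n. (of_nat (G l a a) :: complex))" by simp
  also have "\<dots> = (\<Sum>i<n. Smat l (e i) / Smat 0 (e i))"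
    by (rule trace_eq[OF u dgl])
  also have "\<dots> = (\<Sum>m<8. of_nat (Z m m) * (Smat l m / Smat 0 m))"
    by (rule group_sum[where n=n and e=e and Z=Z and f="\<lambda>m. Smat l m / Smat 0 m", OF e c])
  finally show ?thesis .
qed

lemma N11: "v < 8 \<Longrightarrow> Nfus 1 1 v = (if v = 0 then 1 else 0)"
  by (auto simp: Nfus_def Smat_def S_int_def eval_nat_numeral less_Suc_eq)
lemma N22: "v < 8 \<Longrightarrow> Nfus 2 2 v = (if v \<in> {0,1,2} then 1 else 0)"
  by (auto simp: Nfus_def Smat_def S_int_def eval_nat_numeral less_Suc_eq)
lemma N33: "v < 8 \<Longrightarrow> Nfus 3 3 v = (if v \<in> {0,1,3} then 1 else 0)"
  by (auto simp: Nfus_def Smat_def S_int_def eval_nat_numeral less_Suc_eq)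

lemma crit:
  assumes x: "x = 2 \<or> x = 3"
    and t1: "(\<Sum>m<8. of_nat (Z m m) * (Smat 1 m / Smat 0 m)) = of_nat (trZ Z)"
    and tx: "(\<Sum>m<8. of_nat (Z m m) * (Smat x m / Smat 0 m)) = of_nat t"
    and od: "odd t"
  shows "nimless Z"
  unfolding nimless_def
proof
  assume "\<exists>n G. is_nimrep n G \<and> matches Z n G"
  then obtain n G where nr: "is_nimrep n G" and m: "matches Z n G" by blast
  have n: "n = trZ Z" using m by (simp add: matches_def)
  have g0: "\<forall>i<n. \<forall>j<n. G 0 i j = (if i = j then 1 else 0)"
    and sy: "\<forall>l<8. \<forall>i<n. \<forall>j<n. G l i j = G l j i"
    and fu: "\<forall>l<8. \<forall>m<8. \<forall>i<n. \<forall>j<n.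
        of_nat (\<Sum>k<n. G l i k * G m k j) = (\<Sum>v<8. Nfus l m v * of_nat (G v i j))"
    using nr by (auto simp: is_nimrep_def cconj_def)
  have tr1: "(\<Sum>a<n. G 1 a a) = n"
    using trace_formula[OF m, of 1] t1 n by (simp del: of_nat_sum)
  have sq1: "\<forall>i<n. \<forall>j<n. (\<Sum>k<n. G 1 i k * G 1 k j) = (if i = j then 1 else 0)"
  proof (intro allI impI)
    fix i j assume ij: "i < n" "j < n"
    have "(of_nat (\<Sum>k<n. G 1 i k * G 1 k j) :: complex) = (\<Sum>v<8. Nfus 1 1 v * of_nat (G v i j))"
      using fu ij by simp
    also have "\<dots> = (\<Sum>v<8. if v = 0 then of_nat (G v i j) else 0)"
    proof (intro sum.cong refl)
      fix v assume "v \<in> {..<(8::nat)}"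
      then show "Nfus 1 1 v * of_nat (G v i j) = (if v = 0 then of_nat (G v i j) else 0)"
        using N11[of v] by (simp del: One_nat_def)
    qed
    also have "\<dots> = of_nat (G 0 i j)" by simp
    finally show "(\<Sum>k<n. G 1 i k * G 1 k j) = (if i = j then 1 else 0)"
      using g0 ij by (simp only: of_nat_eq_iff)
  qed
  have g1: "\<forall>i<n. \<forall>j<n. G 1 i j = (if i = j then 1 else 0)"
    by (rule G1_id[OF sq1 _ tr1]) (use sy in auto)
  have trx: "(\<Sum>a<n. G x a a) = t"
    using trace_formula[OF m, of x] tx x by (auto simp del: of_nat_sum)
  have sqx: "\<forall>i<n. \<forall>j<n. (\<Sum>k<n. G x i k * G x k j) = G x i j + (if i = j then 2 else 0)"
  proof (intro allI impI)
    fix i j assume ij: "i < n" "j < n"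
    have "(of_nat (\<Sum>k<n. G x i k * G x k j) :: complex) = (\<Sum>v<8. Nfus x x v * of_nat (G v i j))"
      using fu ij x by auto
    also have "\<dots> = (\<Sum>v<8. if v \<in> {0,1,x} then of_nat (G v i j) else 0)"
    proof (intro sum.cong refl)
      fix v assume "v \<in> {..<(8::nat)}"
      then show "Nfus x x v * of_nat (G v i j) = (if v \<in> {0,1,x} then of_nat (G v i j) else 0)"
        using N22[of v] N33[of v] x by (auto simp del: One_nat_def)
    qed
    also have "\<dots> = of_nat (G 0 i j) + of_nat (G 1 i j) + of_nat (G x i j)"
      using x by (auto simp: eval_nat_numeral)
    also have "\<dots> = of_nat (G x i j + (if i = j then 2 else 0))"
      using g0 g1 ij by simp
    finally show "(\<Sum>k<n. G x i k * G x k j) = G x i j + (if i = j then 2 else 0)"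
      by (simp only: of_nat_eq_iff)
  qed
  show False
    by (rule no_sq[OF sqx _ ]) (use sy x trx od in auto)
qed

theorem proposition6p1:
  shows "nimless Z6 \<and> nimless Z11 \<and> nimless Z14 \<and> nimless Z15 \<and> nimless Z41 \<and> nimless Z51"
proof -
  have "nimless Z6"
    by (rule crit[of 2 _ 1])
       (simp_all add: Z6_def trZ_def Smat_def S_int_def eval_nat_numeral)
  moreover have odd5: "odd (5::nat)" by simp
  moreover have "nimless Z11"
    by (rule crit[of 2 _ 5, OF _ _ _ odd5])
       (simp_all add: Z11_def outer_def s1_def trZ_def Smat_def S_int_def eval_nat_numeral)
  moreover have "nimless Z14"
    by (rule crit[of 3 _ 1])
       (simp_all add: Z14_def outer_def s1_def s4_def trZ_def Smat_def S_int_def eval_nat_numeral)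
  moreover have "nimless Z41"
    by (rule crit[of 3 _ 1])
       (simp_all add: Z41_def outer_def s1_def s4_def trZ_def Smat_def S_int_def eval_nat_numeral)
  moreover have "nimless Z15"
    by (rule crit[of 2 _ 1])
       (simp_all add: Z15_def outer_def s1_def s5_def trZ_def Smat_def S_int_def eval_nat_numeral)
  moreover have "nimless Z51"
    by (rule crit[of 2 _ 1])
       (simp_all add: Z51_def outer_def s1_def s5_def trZ_def Smat_def S_int_def eval_nat_numeral)
  ultimately show ?thesis by blast
qed

end
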